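(* Let $K>0$, $S=1/K$, and let $\eta:(0,K]\to[0,\infty)$ with $\eta(K)=0$; set $\phi(k)=k\eta(k)$ (with $\phi(0)=0$) and $\theta(s)=\eta(1/s)$ for $s\ge S$. Let $\Delta t,\Delta N>0$ and consider a platoon of vehicles $m=0,1,\dots,M$ ($M\ge 1$), vehicle $m-1$ being the leader of vehicle $m$, with positions $Y_m^j$ at times $j\Delta t$. The lead vehicle $0$ follows an arbitrary prescribed trajectory with $Y_0^{j+1}\ge Y_0^j$ for all $j$, and for $m\ge1$ $$Y_m^{j+1}=Y_m^j+\Delta t\,\theta\!\left(\frac{Y_{m-1}^j-Y_m^j}{\Delta N}\right).$$ Call the model collision-free if for every such leader trajectory and every initial configuration with $Y_{m-1}^0-Y_m^0\ge S\Delta N$ for all $m\ge1$, one has $Y_{m-1}^j-Y_m^j\ge S\Delta N$ for all $m\ge 1$ and all $j\ge0$. Then the model is collision-free if and only if $$\frac{\Delta N}{\Delta t}\ \ge\ \sup_{k\in[0,K)}\frac{\phi(k)}{1-k/K}.$$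
   Context: $\eta$ is the speed-density relation, $\phi$ the flow-density relation, $\theta$ the speed-spacing relation, $K$ the jam density and $S$ the jam spacing; the update rule is the time- and vehicle-discrete car-following formulation of the nonstandard second-order (LWR) model, with $\Delta N$ the vehicle step and $\Delta t$ the time step. *)

theory Defs
  imports "HOL-Analysis.Analysis" "HOL-Library.Extended_Real"
begin

definition phi :: "(real \<Rightarrow> real) \<Rightarrow> real \<Rightarrow> real" where
  "phi eta k = (if k = 0 then 0 else k * eta k)"

definition theta :: "(real \<Rightarrow> real) \<Rightarrow> real \<Rightarrow> real" where
  "theta eta s = eta (1 / s)"

definition platoon_traj ::
  "(real \<Rightarrow> real) \<Rightarrow> real \<Rightarrow> real \<Rightarrow> nat \<Rightarrow> (nat \<Rightarrow> nat \<Rightarrow> real) \<Rightarrow> bool" where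
  "platoon_traj eta dt dN M Y \<longleftrightarrow>
     (\<forall>j. Y 0 j \<le> Y 0 (Suc j)) \<and>
     (\<forall>m j. 1 \<le> m \<and> m \<le> M \<longrightarrow>
        Y m (Suc j) = Y m j + dt * theta eta ((Y (m - 1) j - Y m j) / dN))"

definition collision_free ::
  "(real \<Rightarrow> real) \<Rightarrow> real \<Rightarrow> real \<Rightarrow> real \<Rightarrow> nat \<Rightarrow> bool" where
  "collision_free eta K dt dN M \<longleftrightarrow>
     (\<forall>Y. platoon_traj eta dt dN M Y \<longrightarrow>
        (\<forall>m. 1 \<le> m \<and> m \<le> M \<longrightarrow> Y (m - 1) 0 - Y m 0 \<ge> (1 / K) * dN) \<longrightarrow>
        (\<forall>j m. 1 \<le> m \<and> m \<le> M \<longrightarrow> Y (m - 1) j - Y m j \<ge> (1 / K) * dN))"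

end

theory Submission
  imports Defs
begin

fun traj :: "(real \<Rightarrow> real) \<Rightarrow> real \<Rightarrow> real \<Rightarrow> nat \<Rightarrow> real \<Rightarrow> nat \<Rightarrow> nat \<Rightarrow> real" where
  "traj eta dt dN M h m 0 = - real m * h * dN"
| "traj eta dt dN M h m (Suc j) = (if m = 0 \<or> M < m then traj eta dt dN M h m j
     else traj eta dt dN M h m j + dt * theta eta ((traj eta dt dN M h (m - 1) j - traj eta dt dN M h m j) / dN))"

lemma cond_iff:
  assumes K: "K > 0" and dt: "dt > 0" and dN: "dN > 0"
  shows "ereal (dN / dt) \<ge> (SUP k\<in>{0..<K}. ereal (phi eta k / (1 - k / K))) \<longleftrightarrow>
    (\<forall>k. 0 < k \<longrightarrow> k < K \<longrightarrow> dt * eta k \<le> dN * (1 / k - 1 / K))"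
proof -
  have "ereal (dN / dt) \<ge> (SUP k\<in>{0..<K}. ereal (phi eta k / (1 - k / K))) \<longleftrightarrow>
     (\<forall>k\<in>{0..<K}. phi eta k / (1 - k / K) \<le> dN / dt)"
    by (simp add: SUP_le_iff)
  also have "\<dots> \<longleftrightarrow> (\<forall>k. 0 < k \<longrightarrow> k < K \<longrightarrow> dt * eta k \<le> dN * (1 / k - 1 / K))"
  proof (intro iffI allI impI ballI)
    fix k assume H: "\<forall>k\<in>{0..<K}. phi eta k / (1 - k / K) \<le> dN / dt" and k: "0 < k" "k < K"
    have p: "1 - k / K > 0" using k K by simp
    have "phi eta k / (1 - k / K) \<le> dN / dt" using H k by auto
    hence "k * eta k / (1 - k / K) \<le> dN / dt" using k by (simp add: phi_def)
    hence "k * eta k * dt \<le> dN * (1 - k / K)" using p dt by (simp add: field_simps)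
    moreover have "dN * (1 - k / K) = k * (dN * (1 / k - 1 / K))" using k by (simp add: field_simps)
    ultimately have "k * (dt * eta k) \<le> k * (dN * (1 / k - 1 / K))" by (simp add: mult_ac)
    thus "dt * eta k \<le> dN * (1 / k - 1 / K)" using k by simp
  next
    fix k :: real assume H: "\<forall>k. 0 < k \<longrightarrow> k < K \<longrightarrow> dt * eta k \<le> dN * (1 / k - 1 / K)"
      and k: "k \<in> {0..<K}"
    have p: "1 - k / K > 0" using k K by simp
    show "phi eta k / (1 - k / K) \<le> dN / dt"
    proof (cases "k = 0")
      case True thus ?thesis using dt dN by (simp add: phi_def)
    next
      case False
      hence kp: "k > 0" using k by simp
      have "dt * eta k \<le> dN * (1 / k - 1 / K)" using H kp k by simp
      hence "k * (dt * eta k) \<le> k * (dN * (1 / k - 1 / K))" using kp by (simp add: mult_left_mono)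
      moreover have "dN * (1 - k / K) = k * (dN * (1 / k - 1 / K))" using kp by (simp add: field_simps)
      ultimately have "k * eta k * dt \<le> dN * (1 - k / K)" by (metis mult.commute mult.left_commute)
      thus ?thesis using p dt False by (simp add: phi_def field_simps)
    qed
  qed
  finally show ?thesis .
qed

theorem theorem4p2:
  fixes eta :: "real \<Rightarrow> real" and K dt dN :: real and M :: nat
  assumes "K > 0"
    and "\<And>k. 0 < k \<Longrightarrow> k \<le> K \<Longrightarrow> eta k \<ge> 0"
    and "eta K = 0"
    and "dt > 0" and "dN > 0" and "M \<ge> 1"
  shows "collision_free eta K dt dN M \<longleftrightarrow>
    ereal (dN / dt) \<ge> (SUP k\<in>{0..<K}. ereal (phi eta k / (1 - k / K)))"
proof -
  note K = assms(1) and pos = assms(2) and eK = assms(3) and dt = assms(4) and dN = assms(5) and M = assms(6)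
  have "collision_free eta K dt dN M \<longleftrightarrow> (\<forall>k. 0 < k \<longrightarrow> k < K \<longrightarrow> dt * eta k \<le> dN * (1 / k - 1 / K))"
  proof
    assume cf: "collision_free eta K dt dN M"
    show "\<forall>k. 0 < k \<longrightarrow> k < K \<longrightarrow> dt * eta k \<le> dN * (1 / k - 1 / K)"
    proof (intro allI impI)
      fix k :: real assume k: "0 < k" "k < K"
      define h where "h = 1 / k"
      have hK: "h \<ge> 1 / K" using k K unfolding h_def by (simp add: frac_le)
      define Y where "Y = traj eta dt dN M h"
      have tr: "platoon_traj eta dt dN M Y" unfolding platoon_traj_def Y_def by auto
      have init: "\<forall>m. 1 \<le> m \<and> m \<le> M \<longrightarrow> Y (m - 1) 0 - Y m 0 \<ge> (1 / K) * dN"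
      proof (intro allI impI)
        fix m :: nat assume "1 \<le> m \<and> m \<le> M"
        hence "Y (m - 1) 0 - Y m 0 = h * dN" unfolding Y_def by (simp add: of_nat_diff algebra_simps)
        thus "Y (m - 1) 0 - Y m 0 \<ge> (1 / K) * dN" using mult_right_mono[OF hK, of dN] dN by simp
      qed
      have "\<forall>j m. 1 \<le> m \<and> m \<le> M \<longrightarrow> Y (m - 1) j - Y m j \<ge> (1 / K) * dN"
        using cf tr init unfolding collision_free_def by blast
      hence "Y (1 - 1) 1 - Y 1 1 \<ge> (1 / K) * dN" using M by blast
      hence "Y 0 1 - Y 1 1 \<ge> (1 / K) * dN" by simp
      moreover have "Y 0 1 - Y 1 1 = h * dN - dt * eta k"
        using M dN k unfolding Y_def h_def by (simp add: theta_def)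
      ultimately have "dt * eta k \<le> dN * h - dN / K" by (simp add: algebra_simps)
      thus "dt * eta k \<le> dN * (1 / k - 1 / K)" unfolding h_def by (simp add: algebra_simps)
    qed
  next
    assume C: "\<forall>k. 0 < k \<longrightarrow> k < K \<longrightarrow> dt * eta k \<le> dN * (1 / k - 1 / K)"
    show "collision_free eta K dt dN M"
      unfolding collision_free_def
    proof (intro allI impI)
      fix Y j m
      assume tr: "platoon_traj eta dt dN M Y"
        and init: "\<forall>m. 1 \<le> m \<and> m \<le> M \<longrightarrow> Y (m - 1) 0 - Y m 0 \<ge> (1 / K) * dN"
        and mm: "1 \<le> m \<and> m \<le> M"
      have mono0: "\<And>j. Y 0 j \<le> Y 0 (Suc j)" using tr unfolding platoon_traj_def by auto
      have rec: "\<And>m j. 1 \<le> m \<Longrightarrow> m \<le> M \<Longrightarrow>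
          Y m (Suc j) = Y m j + dt * eta (dN / (Y (m - 1) j - Y m j))"
        using tr unfolding platoon_traj_def theta_def by auto
      have "\<forall>m. 1 \<le> m \<and> m \<le> M \<longrightarrow> Y (m - 1) j - Y m j \<ge> (1 / K) * dN"
      proof (induction j)
        case 0 thus ?case using init by blast
      next
        case (Suc j)
        show ?case
        proof (intro allI impI)
          fix m :: nat assume mm: "1 \<le> m \<and> m \<le> M"
          define s where "s = Y (m - 1) j - Y m j"
          have s: "s \<ge> dN / K" using Suc mm unfolding s_def by simp
          have sp: "s > 0" using s dN K by (smt (verit) divide_pos_pos)
          define k where "k = dN / s"
          have kp: "k > 0" unfolding k_def using sp dN by simp
          have kK: "k \<le> K" unfolding k_def using s sp dN K
            by (simp add: divide_le_eq field_simps)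
          have lead: "Y (m - 1) (Suc j) \<ge> Y (m - 1) j"
          proof (cases "m - 1 = 0")
            case True thus ?thesis using mono0 by simp
          next
            case False
            hence m1: "1 \<le> m - 1" "m - 1 \<le> M" using mm by auto
            define s' where "s' = Y (m - 1 - 1) j - Y (m - 1) j"
            have s': "s' \<ge> dN / K" using Suc.IH[rule_format, of "m - 1"] m1 unfolding s'_def by simp
            have sp': "s' > 0" using s' dN K by (smt (verit) divide_pos_pos)
            have "dN / s' > 0" using sp' dN by simp
            moreover have "dN / s' \<le> K" using s' sp' dN K
              by (simp add: divide_le_eq field_simps)
            ultimately have "eta (dN / s') \<ge> 0" using pos by simp
            thus ?thesis using rec[OF m1] dt unfolding s'_def by simp
          qed
          have fol: "Y m (Suc j) = Y m j + dt * eta k" using rec mm unfolding k_def s_def by simp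
          have "dt * eta k \<le> s - dN / K"
          proof (cases "k = K")
            case True thus ?thesis using eK s by simp
          next
            case False
            hence "dt * eta k \<le> dN * (1 / k - 1 / K)" using C kp kK by simp
            also have "\<dots> = s - dN / K" unfolding k_def using dN sp by (simp add: field_simps)
            finally show ?thesis .
          qed
          thus "Y (m - 1) (Suc j) - Y m (Suc j) \<ge> (1 / K) * dN"
            using lead fol unfolding s_def by simp
        qed
      qed
      thus "Y (m - 1) j - Y m j \<ge> (1 / K) * dN" using mm by blast
    qed
  qed
  thus ?thesis using cond_iff[OF K dt dN, of eta] by simp
qed

end
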